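(* Let $n\geq 2$ and let $N$ be a binary level-1 network on $n$ leaves. Then $g(N)\leq n-c_N-2$. Moreover, equality $g(N)=n-c_N-2$ holds if $N$ is a phylogenetic tree (i.e. has no hybrid vertex) or if every gall of $N$ has exactly three outgoing arcs.
   Context: A leaf of a DAG is a vertex of in-degree 1 and out-degree 0. For a finite set $X$, a phylogenetic network on $X$ is a DAG (no loops, no multiple arcs) with a unique vertex (the root) of in-degree 0, which has out-degree at least 2, whose set of leaves is $X$, and in which every other non-leaf vertex is either a split vertex (in-degree 1, out-degree $\geq 2$) or a hybrid vertex (in-degree $\geq 2$, out-degree $\geq 1$). It is binary if the root and all split vertices have out-degree 2 and every hybrid vertex has in-degree 2 and out-degree 1. $U(N)$ denotes the underlying undirected graph. A binary level-1 network is a binary phylogenetic network in which every biconnected component of $U(N)$ contains at most one hybrid vertex; by standing convention every cycle of $U(N)$ has at least four vertices. A gall is a biconnected component of $U(N)$ with more than one edge (with the arc directions of $N$); $g(N)$ is the number of galls of $N$. An outgoing arc of a gall $C$ is an arc whose tail is a vertex of $C$ but whose head is not. An arc of $N$ is a cut arc if deleting it disconnects $U(N)$; it is trivial if its head is a leaf and non-trivial otherwise. $c_N$ denotes the number of non-trivial cut arcs of $N$. *)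

theory Defs
  imports Main
begin

text \<open>A directed graph is given by a finite vertex set V and an arc set A of ordered pairs
  (no multiple arcs by construction).\<close>

definition indeg :: "('v \<times> 'v) set \<Rightarrow> 'v \<Rightarrow> nat" where
  "indeg A v = card {u. (u, v) \<in> A}"

definition outdeg :: "('v \<times> 'v) set \<Rightarrow> 'v \<Rightarrow> nat" where
  "outdeg A v = card {w. (v, w) \<in> A}"

definition leaves :: "'v set \<Rightarrow> ('v \<times> 'v) set \<Rightarrow> 'v set" where
  "leaves V A = {v \<in> V. indeg A v = 1 \<and> outdeg A v = 0}"

definition is_split :: "('v \<times> 'v) set \<Rightarrow> 'v \<Rightarrow> bool" where
  "is_split A v \<longleftrightarrow> indeg A v = 1 \<and> outdeg A v \<ge> 2"

definition is_hybrid :: "('v \<times> 'v) set \<Rightarrow> 'v \<Rightarrow> bool" where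
  "is_hybrid A v \<longleftrightarrow> indeg A v \<ge> 2 \<and> outdeg A v \<ge> 1"

definition phylo_network :: "'v set \<Rightarrow> ('v \<times> 'v) set \<Rightarrow> 'v set \<Rightarrow> 'v \<Rightarrow> bool" where
  "phylo_network V A X r \<longleftrightarrow>
     finite V \<and> A \<subseteq> V \<times> V \<and> acyclic A \<and>
     r \<in> V \<and> indeg A r = 0 \<and> outdeg A r \<ge> 2 \<and>
     (\<forall>v\<in>V. indeg A v = 0 \<longrightarrow> v = r) \<and>
     X = leaves V A \<and>
     (\<forall>v \<in> V - {r} - X. is_split A v \<or> is_hybrid A v)"

definition binary_network :: "'v set \<Rightarrow> ('v \<times> 'v) set \<Rightarrow> 'v set \<Rightarrow> 'v \<Rightarrow> bool" where
  "binary_network V A X r \<longleftrightarrow> phylo_network V A X r \<and> outdeg A r = 2 \<and>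
     (\<forall>v\<in>V. is_split A v \<longrightarrow> outdeg A v = 2) \<and>
     (\<forall>v\<in>V. is_hybrid A v \<longrightarrow> indeg A v = 2 \<and> outdeg A v = 1)"

definition uadj :: "('v \<times> 'v) set \<Rightarrow> 'v \<Rightarrow> 'v \<Rightarrow> bool" where
  "uadj A u v \<longleftrightarrow> (u, v) \<in> A \<or> (v, u) \<in> A"

definition ucycle :: "('v \<times> 'v) set \<Rightarrow> 'v list \<Rightarrow> bool" where
  "ucycle A cs \<longleftrightarrow> length cs \<ge> 3 \<and> distinct cs \<and>
     (\<forall>i < length cs. uadj A (cs ! i) (cs ! ((i + 1) mod length cs)))"

definition cycle_arcs :: "('v \<times> 'v) set \<Rightarrow> 'v list \<Rightarrow> ('v \<times> 'v) set" where
  "cycle_arcs A cs = {a \<in> A. \<exists>i < length cs.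
      a = (cs ! i, cs ! ((i + 1) mod length cs)) \<or> a = (cs ! ((i + 1) mod length cs), cs ! i)}"

text \<open>Two edges lie in the same biconnected component iff they are equal or lie on a common
  cycle; biconnected components are the resulting classes of edges (with arc directions).\<close>
definition same_block :: "('v \<times> 'v) set \<Rightarrow> ('v \<times> 'v) \<Rightarrow> ('v \<times> 'v) \<Rightarrow> bool" where
  "same_block A e f \<longleftrightarrow> e = f \<or> (\<exists>cs. ucycle A cs \<and> e \<in> cycle_arcs A cs \<and> f \<in> cycle_arcs A cs)"

definition blocks :: "('v \<times> 'v) set \<Rightarrow> ('v \<times> 'v) set set" where
  "blocks A = {{f \<in> A. same_block A e f} | e. e \<in> A}"

definition block_verts :: "('v \<times> 'v) set \<Rightarrow> 'v set" where
  "block_verts C = fst ` C \<union> snd ` C"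

definition galls :: "('v \<times> 'v) set \<Rightarrow> ('v \<times> 'v) set set" where
  "galls A = {C \<in> blocks A. card C > 1}"

definition num_galls :: "('v \<times> 'v) set \<Rightarrow> nat" where
  "num_galls A = card (galls A)"

definition outgoing_arcs :: "('v \<times> 'v) set \<Rightarrow> ('v \<times> 'v) set \<Rightarrow> ('v \<times> 'v) set" where
  "outgoing_arcs A C = {(u, w) \<in> A. u \<in> block_verts C \<and> w \<notin> block_verts C}"

text \<open>Standing convention: every cycle of U(N) has at least four vertices.\<close>
definition binary_level1 :: "'v set \<Rightarrow> ('v \<times> 'v) set \<Rightarrow> 'v set \<Rightarrow> 'v \<Rightarrow> bool" where
  "binary_level1 V A X r \<longleftrightarrow> binary_network V A X r \<and>
     (\<forall>C \<in> blocks A. card {v \<in> block_verts C. is_hybrid A v} \<le> 1) \<and>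
     (\<forall>cs. ucycle A cs \<longrightarrow> length cs \<ge> 4)"

definition uconnected :: "'v set \<Rightarrow> ('v \<times> 'v) set \<Rightarrow> bool" where
  "uconnected V B \<longleftrightarrow> (\<forall>u\<in>V. \<forall>v\<in>V. (u, v) \<in> (B \<union> B\<inverse>)\<^sup>*)"

definition is_cut_arc :: "'v set \<Rightarrow> ('v \<times> 'v) set \<Rightarrow> ('v \<times> 'v) \<Rightarrow> bool" where
  "is_cut_arc V A a \<longleftrightarrow> a \<in> A \<and> \<not> uconnected V (A - {a})"

definition num_nontriv_cut_arcs :: "'v set \<Rightarrow> ('v \<times> 'v) set \<Rightarrow> nat" where
  "num_nontriv_cut_arcs V A = card {(u, w). is_cut_arc V A (u, w) \<and> w \<notin> leaves V A}"

end

theory Submission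
  imports Defs
begin

definition pr :: "'a list \<Rightarrow> ('a \<times> 'a) set" where
  "pr xs = set (zip xs (tl xs))"

lemma pr_Nil[simp]: "pr [] = {}" and pr_single[simp]: "pr [x] = {}"
  by (auto simp: pr_def)

lemma pr_Cons2[simp]: "pr (x # y # zs) = insert (x, y) (pr (y # zs))"
  by (auto simp: pr_def)

lemma pr_Cons: "xs \<noteq> [] \<Longrightarrow> pr (x # xs) = insert (x, hd xs) (pr xs)"
  by (cases xs) auto

lemma pr_append: "xs \<noteq> [] \<Longrightarrow> ys \<noteq> [] \<Longrightarrow> pr (xs @ ys) = pr xs \<union> pr ys \<union> {(last xs, hd ys)}"
proof (induction xs)
  case Nil then show ?case by simp
next
  case (Cons x xs)
  show ?case
  proof (cases "xs = []")
    case True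
    then show ?thesis using Cons by (simp add: pr_Cons)
  next
    case False
    then show ?thesis using Cons by (auto simp: pr_Cons)
  qed
qed

lemma successively_pr: "successively P xs \<longleftrightarrow> (\<forall>(a, b) \<in> pr xs. P a b)"
  by (induction xs rule: induct_list012) auto

lemma pr_sub_set: "(a, b) \<in> pr xs \<Longrightarrow> a \<in> set xs \<and> b \<in> set xs"
  unfolding pr_def by (cases xs) (auto dest: set_zip_leftD set_zip_rightD)

lemma pr_mono_app1: "pr xs \<subseteq> pr (xs @ ys)"
  by (cases "xs = []"; cases "ys = []") (auto simp: pr_append)
lemma pr_mono_app2: "pr ys \<subseteq> pr (xs @ ys)"
  by (cases "xs = []"; cases "ys = []") (auto simp: pr_append)

definition cp :: "'a list \<Rightarrow> ('a \<times> 'a) set" where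
  "cp xs = pr (xs @ [hd xs])"

lemma cp_eq: assumes "xs \<noteq> []"
  shows "cp xs = {(xs ! i, xs ! ((i + 1) mod length xs)) | i. i < length xs}"
proof -
  have L: "length (tl (xs @ [hd xs])) = length xs" by simp
  have a: "(xs @ [hd xs]) ! i = xs ! i" if "i < length xs" for i
    using that by (simp add: nth_append)
  have b: "tl (xs @ [hd xs]) ! i = xs ! ((i + 1) mod length xs)" if "i < length xs" for i
  proof -
    have "tl (xs @ [hd xs]) ! i = (xs @ [hd xs]) ! Suc i" using assms
      by (cases xs) auto
    also have "\<dots> = xs ! ((i + 1) mod length xs)"
    proof (cases "Suc i < length xs")
      case True then show ?thesis by (simp add: nth_append)
    next
      case False
      then have "Suc i = length xs" using that by simp
      then show ?thesis using assms by (simp add: nth_append hd_conv_nth)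
    qed
    finally show ?thesis .
  qed
  show ?thesis unfolding cp_def pr_def set_zip using a b L
    by (auto simp: min_def) (metis a b)+
qed

lemma cp_rotate1: "cp (rotate1 xs) = cp xs"
proof (cases xs)
  case Nil then show ?thesis by simp
next
  case (Cons x zs)
  show ?thesis
  proof (cases "zs = []")
    case True then show ?thesis using Cons by simp
  next
    case False
    have "cp xs = pr ([x] @ (zs @ [x]))" using Cons by (simp add: cp_def)
    also have "\<dots> = {(x, hd zs)} \<union> (pr zs \<union> {(last zs, x)})"
      using False pr_append[of "[x]" "zs @ [x]"] pr_append[of zs "[x]"] by auto
    finally have 1: "cp xs = {(x, hd zs)} \<union> (pr zs \<union> {(last zs, x)})" .
    have "cp (rotate1 xs) = pr ((zs @ [x]) @ [hd zs])" using Cons False by (simp add: cp_def)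
    also have "\<dots> = pr zs \<union> {(last zs, x)} \<union> {(x, hd zs)}"
      using False pr_append[of "zs @ [x]" "[hd zs]"] pr_append[of zs "[x]"] by auto
    finally show ?thesis using 1 by auto
  qed
qed

lemma cp_rotate: "cp (rotate n xs) = cp xs"
  by (induction n) (simp_all add: cp_rotate1)

lemma cp_Cons: "ys \<noteq> [] \<Longrightarrow> cp (h # ys) = {(h, hd ys)} \<union> pr ys \<union> {(last ys, h)}"
  unfolding cp_def using pr_append[of "[h]" "ys @ [h]"] pr_append[of ys "[h]"] by auto

lemma rotate_to_front:
  assumes "h \<in> set cs"
  shows "\<exists>ys. rotate (length (takeWhile (\<lambda>x. x \<noteq> h) cs)) cs = h # ys"
proof -
  obtain as bs where cs: "cs = as @ h # bs" and "h \<notin> set as"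
    using split_list_first[OF assms] by blast
  then have "takeWhile (\<lambda>x. x \<noteq> h) cs = as" by (simp add: takeWhile_append)
  then show ?thesis using cs by (simp add: rotate_append)
qed

lemma walk_exists:
  assumes "(x, y) \<in> R\<^sup>*"
  shows "\<exists>ps. ps \<noteq> [] \<and> hd ps = x \<and> last ps = y \<and> successively (\<lambda>a b. (a, b) \<in> R) ps"
  using assms
proof (induction rule: rtrancl_induct)
  case base then show ?case by (intro exI[of _ "[x]"]) auto
next
  case (step y z)
  then obtain ps where "ps \<noteq> []" "hd ps = x" "last ps = y" "successively (\<lambda>a b. (a, b) \<in> R) ps"
    by blast
  then show ?case using step by (intro exI[of _ "ps @ [z]"]) (auto simp: successively_append_iff)
qed

lemma simple_walk_exists:
  assumes "(x, y) \<in> R\<^sup>*"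
  shows "\<exists>ps. ps \<noteq> [] \<and> hd ps = x \<and> last ps = y \<and> distinct ps \<and> successively (\<lambda>a b. (a, b) \<in> R) ps"
proof -
  define P where "P ps \<longleftrightarrow> ps \<noteq> [] \<and> hd ps = x \<and> last ps = y \<and> successively (\<lambda>a b. (a, b) \<in> R) ps" for ps
  have ex: "\<exists>ps. P ps" using walk_exists[OF assms] unfolding P_def by blast
  have "\<exists>ps. P ps \<and> distinct ps" if "P ps" for ps
    using that
  proof (induction ps rule: length_induct)
    case (1 ps)
    show ?case
    proof (cases "distinct ps")
      case True then show ?thesis using 1 by blast
    next
      case False
      then obtain as bs cs v where ps: "ps = as @ [v] @ bs @ [v] @ cs"
        using not_distinct_decomp by blast
      have s1: "successively (\<lambda>a b. (a, b) \<in> R) (as @ [v])"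
        using "1.prems" unfolding P_def ps
        using successively_append_iff[of _ "as @ [v]" "bs @ [v] @ cs"] by auto
      have s2: "successively (\<lambda>a b. (a, b) \<in> R) (v # cs)"
        using "1.prems" unfolding P_def ps
        using successively_append_iff[of _ "as @ [v] @ bs" "v # cs"] by auto
      have "P (as @ [v] @ cs)"
        using "1.prems" s1 s2 unfolding P_def ps
        by (cases "as = []"; cases "cs = []") (auto simp: successively_append_iff successively_Cons)
      moreover have "length (as @ [v] @ cs) < length ps" using ps by simp
      ultimately show ?thesis using "1.IH" by blast
    qed
  qed
  then show ?thesis using ex unfolding P_def by blast
qed

lemma walk_reach:
  assumes "successively (\<lambda>a b. (a, b) \<in> R) ps" "v \<in> set ps"
  shows "(hd ps, v) \<in> R\<^sup>* \<and> (v, last ps) \<in> R\<^sup>*"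
  using assms
proof (induction ps arbitrary: v)
  case (Cons x zs)
  show ?case
  proof (cases "zs = []")
    case True then show ?thesis using Cons by auto
  next
    case False
    then have xz: "(x, hd zs) \<in> R" and sz: "successively (\<lambda>a b. (a, b) \<in> R) zs"
      using Cons.prems by (auto simp: successively_Cons)
    have hz: "(hd zs, last zs) \<in> R\<^sup>*" using Cons.IH[OF sz, of "last zs"] False by simp
    show ?thesis
    proof (cases "v = x")
      case True then show ?thesis using False xz hz by auto
    next
      case nv: False
      then have "v \<in> set zs" using Cons.prems by simp
      then show ?thesis using Cons.IH[OF sz] False xz
        by (auto intro: converse_rtrancl_into_rtrancl)
    qed
  qed
qed auto

lemma walk_pred:
  assumes "successively P xs" "v \<in> set xs" "v \<noteq> hd xs"
  shows "\<exists>w. (w, v) \<in> pr xs \<and> P w v"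
proof -
  obtain as bs where xs: "xs = as @ v # bs" using split_list[OF assms(2)] by blast
  with assms(3) have "as \<noteq> []" by auto
  then have "(last as, v) \<in> pr xs" using xs pr_append[of as "v # bs"] by auto
  moreover have "P (last as) v" using assms(1) xs \<open>as \<noteq> []\<close> by (simp add: successively_append_iff)
  ultimately show ?thesis by blast
qed

lemma walk_succ:
  assumes "successively P xs" "v \<in> set xs" "v \<noteq> last xs"
  shows "\<exists>w. (v, w) \<in> pr xs \<and> P v w"
proof -
  obtain as bs where xs: "xs = as @ v # bs" using split_list[OF assms(2)] by blast
  with assms(3) have "bs \<noteq> []" by auto
  then have "(v, hd bs) \<in> pr xs" using xs pr_append[of as "v # bs"] pr_Cons[of bs v]
    by (cases "as = []") auto
  moreover have "P v (hd bs)" using assms(1) xs \<open>bs \<noteq> []\<close>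
    by (simp add: successively_append_iff successively_Cons)
  ultimately show ?thesis by blast
qed



locale net =
  fixes V :: "'v set" and A :: "('v \<times> 'v) set" and X :: "'v set" and r :: 'v
  assumes L1: "binary_level1 V A X r"
begin

abbreviation hyb where "hyb v \<equiv> is_hybrid A v"

lemma finV: "finite V" and AV: "A \<subseteq> V \<times> V" and acyc: "acyclic A" and rV: "r \<in> V"
  and in_r: "indeg A r = 0" and out_r: "outdeg A r = 2"
  and only_root: "\<And>v. v \<in> V \<Longrightarrow> indeg A v = 0 \<Longrightarrow> v = r"
  and Xdef: "X = leaves V A"
  and inner: "\<And>v. v \<in> V - {r} - X \<Longrightarrow> is_split A v \<or> is_hybrid A v"
  and split2: "\<And>v. v \<in> V \<Longrightarrow> is_split A v \<Longrightarrow> outdeg A v = 2"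
  and hyb2: "\<And>v. v \<in> V \<Longrightarrow> is_hybrid A v \<Longrightarrow> indeg A v = 2 \<and> outdeg A v = 1"
  and lev1: "\<And>C. C \<in> blocks A \<Longrightarrow> card {v \<in> block_verts C. is_hybrid A v} \<le> 1"
  and cyc4: "\<And>cs. ucycle A cs \<Longrightarrow> length cs \<ge> 4"
  using L1 unfolding binary_level1_def binary_network_def phylo_network_def by auto

lemma finA: "finite A" using finV AV finite_subset by blast

lemma fin_in: "finite {u. (u, v) \<in> A}"
proof -
  have "{u. (u, v) \<in> A} \<subseteq> fst ` A" by force
  then show ?thesis using finA finite_subset by blast
qed

lemma fin_out: "finite {w. (v, w) \<in> A}"
proof -
  have "{w. (v, w) \<in> A} \<subseteq> snd ` A" by force
  then show ?thesis using finA finite_subset by blast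
qed

lemma arcV: "(u, v) \<in> A \<Longrightarrow> u \<in> V \<and> v \<in> V" using AV by auto

lemma noloop: "(v, v) \<notin> A" using acyc unfolding acyclic_def by blast

lemma notboth: "(u, v) \<in> A \<Longrightarrow> (v, u) \<notin> A"
  using acyc unfolding acyclic_def by (meson trancl.r_into_trancl trancl_into_trancl)

lemma acyc_star: "(u, v) \<in> A \<Longrightarrow> (v, u) \<in> A\<^sup>* \<Longrightarrow> False"
  using acyc unfolding acyclic_def by (meson rtrancl_into_trancl2)

lemma acyc_plus: "(u, v) \<in> A\<^sup>+ \<Longrightarrow> (v, u) \<in> A\<^sup>* \<Longrightarrow> False"
  using acyc unfolding acyclic_def by (meson trancl_rtrancl_trancl)

lemma leafD: "x \<in> X \<Longrightarrow> x \<in> V \<and> indeg A x = 1 \<and> outdeg A x = 0"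
  using Xdef unfolding leaves_def by auto

lemma in_card_le1_unique:
  assumes "card {u. (u, v) \<in> A} \<le> 1" "(a, v) \<in> A" "(b, v) \<in> A"
  shows "a = b"
proof (rule ccontr)
  assume "a \<noteq> b"
  then have "{a, b} \<subseteq> {u. (u, v) \<in> A}" using assms by auto
  then have "card {a, b} \<le> card {u. (u, v) \<in> A}" using fin_in card_mono by blast
  then show False using \<open>a \<noteq> b\<close> assms(1) by simp
qed

lemma nonhyb_indeg: assumes "v \<in> V" "\<not> hyb v" shows "indeg A v \<le> 1"
proof -
  consider "v = r" | "v \<in> X" | "v \<in> V - {r} - X" using assms by blast
  then show ?thesis
  proof cases
    case 1 then show ?thesis using in_r by simp
  next
    case 2 then show ?thesis using leafD by simp
  next
    case 3 then show ?thesis using inner[OF 3] assms unfolding is_split_def by auto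
  qed
qed

lemma nonhyb_unique_parent:
  assumes "\<not> hyb v" "(a, v) \<in> A" "(b, v) \<in> A" shows "a = b"
  using in_card_le1_unique nonhyb_indeg[OF _ assms(1)] arcV assms unfolding indeg_def by blast

lemma nonhyb_nonleaf_out: assumes "v \<in> V" "\<not> hyb v" "v \<notin> X" shows "outdeg A v = 2"
proof (cases "v = r")
  case True then show ?thesis using out_r by simp
next
  case False then show ?thesis using inner[of v] assms split2 by auto
qed

lemma hyb_parents:
  assumes "hyb h" "h \<in> V" "(p1, h) \<in> A" "(p2, h) \<in> A" "p1 \<noteq> p2" "(u, h) \<in> A"
  shows "u = p1 \<or> u = p2"
proof (rule ccontr)
  assume "\<not> (u = p1 \<or> u = p2)"
  then have "{u, p1, p2} \<subseteq> {u. (u, h) \<in> A}" using assms by auto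
  then have "card {u, p1, p2} \<le> indeg A h" unfolding indeg_def using fin_in card_mono by blast
  then show False using hyb2[OF assms(2,1)] \<open>\<not> (u = p1 \<or> u = p2)\<close> assms(5) by simp
qed

lemma indeg2_hyb: assumes "(p1, h) \<in> A" "(p2, h) \<in> A" "p1 \<noteq> p2" shows "hyb h"
  using nonhyb_unique_parent assms by blast

lemma wfA: "wf A" using finite_acyclic_wf[OF finA acyc] .

lemma reach: "v \<in> V \<Longrightarrow> (r, v) \<in> A\<^sup>*"
proof (induction v rule: wf_induct_rule[OF wfA])
  case (1 v)
  show ?case
  proof (cases "v = r")
    case True then show ?thesis by simp
  next
    case False
    then have "indeg A v \<noteq> 0" using only_root 1 by blast
    then have "{u. (u, v) \<in> A} \<noteq> {}" unfolding indeg_def by (metis card.empty)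
    then obtain u where "(u, v) \<in> A" by blast
    then show ?thesis using 1 arcV by (meson rtrancl.simps)
  qed
qed

lemma uconn: "uconnected V A"
proof -
  have "(r, v) \<in> (A \<union> A\<inverse>)\<^sup>*" if "v \<in> V" for v
    using reach[OF that] rtrancl_mono[of A "A \<union> A\<inverse>"] by blast
  then have "(u, v) \<in> (A \<union> A\<inverse>)\<^sup>*" if "u \<in> V" "v \<in> V" for u v
  proof -
    have "(r, u) \<in> (A \<union> A\<inverse>)\<^sup>*" using \<open>\<And>v. v \<in> V \<Longrightarrow> _\<close> that by blast
    then have "(u, r) \<in> (A \<union> A\<inverse>)\<^sup>*"
      by (metis converse_Un converse_converse rtrancl_converseI sup_commute)
    then show ?thesis using \<open>\<And>v. v \<in> V \<Longrightarrow> _\<close> that by (meson rtrancl_trans)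
  qed
  then show ?thesis unfolding uconnected_def by blast
qed

end


lemma ucycle_cp: "ucycle A cs \<longleftrightarrow> 3 \<le> length cs \<and> distinct cs \<and> (\<forall>(x, y) \<in> cp cs. uadj A x y)"
proof (cases "cs = []")
  case True then show ?thesis unfolding ucycle_def by simp
next
  case False
  show ?thesis unfolding ucycle_def cp_eq[OF False] by auto
qed

lemma cycle_arcs_cp: "cs \<noteq> [] \<Longrightarrow>
  cycle_arcs A cs = {a \<in> A. \<exists>(x, y) \<in> cp cs. a = (x, y) \<or> a = (y, x)}"
  unfolding cycle_arcs_def cp_eq by auto

lemma ucycle_rotate: "ucycle A (rotate n cs) \<longleftrightarrow> ucycle A cs"
  unfolding ucycle_cp cp_rotate by simp

lemma cycle_arcs_rotate: "cs \<noteq> [] \<Longrightarrow> cycle_arcs A (rotate n cs) = cycle_arcs A cs"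
  using cycle_arcs_cp[of cs A] cycle_arcs_cp[of "rotate n cs" A] cp_rotate[of n cs] by auto

lemma cyc_front:
  assumes "ucycle A cs" "h \<in> set cs"
  shows "\<exists>ys. ucycle A (h # ys) \<and> set (h # ys) = set cs \<and> cycle_arcs A (h # ys) = cycle_arcs A cs"
proof -
  obtain ys n where "rotate n cs = h # ys" using rotate_to_front[OF assms(2)] by blast
  moreover have "cs \<noteq> []" using assms(2) by auto
  ultimately show ?thesis using ucycle_rotate[of A n cs] cycle_arcs_rotate[of cs A n] assms(1)
    by (metis set_rotate)
qed

lemma ucycle_Cons: "ucycle A (h # ys) \<longleftrightarrow>
   2 \<le> length ys \<and> distinct (h # ys) \<and> successively (uadj A) (h # ys @ [h])"
  unfolding ucycle_cp cp_def successively_pr by auto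

lemma cycle_arcs_Cons: "cycle_arcs A (h # ys) =
   {a \<in> A. \<exists>(x, y) \<in> pr (h # ys @ [h]). a = (x, y) \<or> a = (y, x)}"
  using cycle_arcs_cp[of "h # ys" A] unfolding cp_def by simp

lemma cycle_arcs_sub: "cycle_arcs A cs \<subseteq> A" unfolding cycle_arcs_def by auto

lemma cycle_arcs_verts: "cycle_arcs A cs \<subseteq> set cs \<times> set cs"
proof
  fix a assume a: "a \<in> cycle_arcs A cs"
  then obtain i where "i < length cs" "a = (cs ! i, cs ! ((i + 1) mod length cs)) \<or>
      a = (cs ! ((i + 1) mod length cs), cs ! i)"
    unfolding cycle_arcs_def by auto
  moreover have "(i + 1) mod length cs < length cs"
  proof -
    have "0 < length cs" using \<open>i < length cs\<close> by linarith
    then show ?thesis using mod_less_divisor by blast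
  qed
  ultimately show "a \<in> set cs \<times> set cs" by auto
qed

lemma verts_in_arcs:
  assumes "ucycle A cs" "x \<in> set cs"
  shows "x \<in> block_verts (cycle_arcs A cs)"
proof -
  obtain i where i: "i < length cs" "cs ! i = x" using assms(2) by (meson in_set_conv_nth)
  have "uadj A (cs ! i) (cs ! ((i + 1) mod length cs))" using assms(1) i unfolding ucycle_def by auto
  then have "(cs ! i, cs ! ((i + 1) mod length cs)) \<in> cycle_arcs A cs \<or>
     (cs ! ((i + 1) mod length cs), cs ! i) \<in> cycle_arcs A cs"
    unfolding uadj_def cycle_arcs_def using i by blast
  then show ?thesis unfolding block_verts_def using i by force
qed

lemma block_verts_cycle: assumes "ucycle A cs" shows "block_verts (cycle_arcs A cs) = set cs"
proof
  show "set cs \<subseteq> block_verts (cycle_arcs A cs)" using verts_in_arcs[OF assms] by blast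
  show "block_verts (cycle_arcs A cs) \<subseteq> set cs" using cycle_arcs_verts[of A cs]
    unfolding block_verts_def by auto
qed

lemma cycle_arcs_nonempty: assumes "ucycle A cs" shows "cycle_arcs A cs \<noteq> {}"
proof
  assume e: "cycle_arcs A cs = {}"
  have "cs \<noteq> []" using assms unfolding ucycle_def by auto
  then have "hd cs \<in> block_verts (cycle_arcs A cs)" using verts_in_arcs[OF assms, of "hd cs"] by simp
  then show False using e unfolding block_verts_def by simp
qed

lemma cycle_in_block:
  assumes "e \<in> cycle_arcs A cs" "ucycle A cs"
  shows "cycle_arcs A cs \<subseteq> {f \<in> A. same_block A e f}"
  using assms cycle_arcs_sub unfolding same_block_def by blast

context net begin

lemma block_in_blocks: "e \<in> A \<Longrightarrow> {f \<in> A. same_block A e f} \<in> blocks A"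
  unfolding blocks_def by blast

lemma cyc_hyb_unique:
  assumes "ucycle A cs" "v \<in> set cs" "w \<in> set cs" "hyb v" "hyb w"
  shows "v = w"
proof -
  obtain e where e: "e \<in> cycle_arcs A cs" using cycle_arcs_nonempty[OF assms(1)] by blast
  define B where "B = {f \<in> A. same_block A e f}"
  have "B \<in> blocks A" unfolding B_def using e cycle_arcs_sub block_in_blocks by blast
  then have c: "card {v \<in> block_verts B. hyb v} \<le> 1" using lev1 by blast
  have sub: "set cs \<subseteq> block_verts B"
    using block_verts_cycle[OF assms(1)] cycle_in_block[OF e assms(1)] unfolding B_def block_verts_def
    by blast
  have fin: "finite {v \<in> block_verts B. hyb v}"
  proof -
    have "block_verts B \<subseteq> V" unfolding B_def block_verts_def using AV by auto
    then show ?thesis using finV finite_subset by (metis (no_types, lifting) mem_Collect_eq subsetI)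
  qed
  show ?thesis
  proof (rule ccontr)
    assume "v \<noteq> w"
    have "{v, w} \<subseteq> {v \<in> block_verts B. hyb v}" using sub assms by auto
    then have "card {v, w} \<le> card {v \<in> block_verts B. hyb v}"
      using card_mono[OF fin] by blast
    then show False using c \<open>v \<noteq> w\<close> by simp
  qed
qed

lemma sink:
  assumes "ucycle A cs"
  shows "\<exists>h ys. ucycle A (h # ys) \<and> set (h # ys) = set cs \<and> cycle_arcs A (h # ys) = cycle_arcs A cs
     \<and> (hd ys, h) \<in> A \<and> (last ys, h) \<in> A \<and> hyb h \<and> h \<in> V"
proof -
  have wf: "wf ((A\<^sup>+)\<inverse>)"
    using wf_trancl[OF finite_acyclic_wf_converse[OF finA acyc]] by (simp add: trancl_converse)
  have "cs \<noteq> []" using assms unfolding ucycle_def by auto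
  then obtain h where h: "h \<in> set cs" "\<And>y. (y, h) \<in> (A\<^sup>+)\<inverse> \<Longrightarrow> y \<notin> set cs"
    using wfE_min[OF wf, of "hd cs" "set cs"] by (metis hd_in_set)
  obtain ys where ys: "ucycle A (h # ys)" "set (h # ys) = set cs" "cycle_arcs A (h # ys) = cycle_arcs A cs"
    using cyc_front[OF assms h(1)] by blast
  have l: "2 \<le> length ys" "distinct (h # ys)" "successively (uadj A) (h # ys @ [h])"
    using ys(1) unfolding ucycle_Cons by auto
  have ne: "ys \<noteq> []" using l by auto
  have a1: "uadj A h (hd ys)" using l(3) ne by (cases ys) auto
  have "successively (uadj A) ((h # ys) @ [h])" using l(3) by simp
  then have "h # ys = [] \<or> [h] = [] \<or> uadj A (last (h # ys)) (hd [h])" by (simp only: successively_append_iff)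
  then have a2: "uadj A (last ys) h" using ne by simp
  have "hd ys \<in> set ys" "last ys \<in> set ys" using ne by auto
  then have "hd ys \<in> set cs" "last ys \<in> set cs" using ys(2) by (metis list.set_intros(2))+
  then have "(h, hd ys) \<notin> A" "(h, last ys) \<notin> A" using h(2) by auto
  then have p: "(hd ys, h) \<in> A" "(last ys, h) \<in> A" using a1 a2 unfolding uadj_def by auto
  have "hd ys \<noteq> last ys"
  proof
    assume "hd ys = last ys"
    moreover obtain y ys' where "ys = y # ys'" using ne by (cases ys) auto
    moreover have "ys' \<noteq> []" using l(1) calculation(2) by auto
    ultimately show False using l(2) by (metis distinct.simps(2) last.simps last_in_set list.sel(1))
  qed
  then have "hyb h" using indeg2_hyb p by blast
  then show ?thesis using ys p arcV by blast
qed

lemma leaf_not_on_cycle: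
  assumes "ucycle A cs" "x \<in> set cs"
  shows "x \<notin> X"
proof
  assume x: "x \<in> X"
  obtain ys where ys: "ucycle A (x # ys)" using cyc_front[OF assms] by blast
  have l: "2 \<le> length ys" "distinct (x # ys)" "successively (uadj A) (x # ys @ [x])"
    using ys unfolding ucycle_Cons by auto
  have ne: "ys \<noteq> []" using l by auto
  have a1: "uadj A x (hd ys)" using l(3) ne by (cases ys) auto
  have "successively (uadj A) ((x # ys) @ [x])" using l(3) by simp
  then have "x # ys = [] \<or> [x] = [] \<or> uadj A (last (x # ys)) (hd [x])" by (simp only: successively_append_iff)
  then have a2: "uadj A (last ys) x" using ne by simp
  have "{w. (x, w) \<in> A} = {}" using leafD[OF x] fin_out unfolding outdeg_def by simp
  then have p: "(hd ys, x) \<in> A" "(last ys, x) \<in> A" using a1 a2 unfolding uadj_def by auto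
  have "hd ys \<noteq> last ys"
  proof
    assume "hd ys = last ys"
    moreover obtain y ys' where "ys = y # ys'" using ne by (cases ys) auto
    moreover have "ys' \<noteq> []" using l(1) calculation(2) by auto
    ultimately show False using l(2) by (metis distinct.simps(2) last.simps last_in_set list.sel(1))
  qed
  then have "hyb x" using indeg2_hyb p by blast
  then show False using hyb2 leafD[OF x] by auto
qed

end


lemma orient:
  assumes "successively (\<lambda>a b. (a, b) \<in> R \<or> (b, a) \<in> R) ys" "distinct ys" "ys \<noteq> []"
    "\<forall>v\<in>set ys. \<forall>a b. (a, v) \<in> R \<longrightarrow> (b, v) \<in> R \<longrightarrow> a = b"
  shows "\<exists>L1 s L2. ys = L1 @ s # L2 \<and> successively (\<lambda>a b. (b, a) \<in> R) (L1 @ [s])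
           \<and> successively (\<lambda>a b. (a, b) \<in> R) (s # L2)"
  using assms
proof (induction ys)
  case Nil then show ?case by simp
next
  case (Cons y zs)
  show ?case
  proof (cases "zs = []")
    case True then show ?thesis by (intro exI[of _ "[]"] exI[of _ y]) simp
  next
    case False
    have sz: "successively (\<lambda>a b. (a, b) \<in> R \<or> (b, a) \<in> R) zs"
      and yz: "(y, hd zs) \<in> R \<or> (hd zs, y) \<in> R"
      using Cons.prems(1) False by (auto simp: successively_Cons)
    obtain L1 s L2 where zs: "zs = L1 @ s # L2" and b: "successively (\<lambda>a b. (b, a) \<in> R) (L1 @ [s])"
      and f: "successively (\<lambda>a b. (a, b) \<in> R) (s # L2)"
      using Cons.IH[OF sz] Cons.prems False by auto
    have hz: "hd zs = hd (L1 @ [s])" using zs by (cases L1) auto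
    show ?thesis
    proof (cases "(hd zs, y) \<in> R")
      case True
      have "successively (\<lambda>a b. (b, a) \<in> R) (y # L1 @ [s])"
        using b True hz by (simp add: successively_Cons)
      then show ?thesis using zs f by (intro exI[of _ "y # L1"] exI[of _ s] exI[of _ L2]) simp
    next
      case nf: False
      then have yz': "(y, hd zs) \<in> R" using yz by blast
      have "L1 = []"
      proof (rule ccontr)
        assume "L1 \<noteq> []"
        then obtain z L' where L1: "L1 = z # L'" by (cases L1) auto
        have "(hd (L' @ [s]), z) \<in> R" using b L1 by (simp add: successively_Cons)
        moreover have "hd zs = z" using zs L1 by simp
        moreover have "z \<in> set (y # zs)" using zs L1 by simp
        ultimately have "y = hd (L' @ [s])" using yz' Cons.prems(4) by blast
        moreover have "hd (L' @ [s]) \<in> set zs" using zs L1 by (cases L') auto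
        ultimately show False using Cons.prems(2) by simp
      qed
      then have "zs = s # L2" "hd zs = s" using zs by auto
      then show ?thesis using f yz' by (intro exI[of _ "[]"] exI[of _ y] exI[of _ zs]) simp
    qed
  qed
qed

lemma anc_path:
  assumes "successively (\<lambda>a b. (a, b) \<in> R) ps" "ps \<noteq> []"
    "\<And>a b c. (a, c) \<in> R \<Longrightarrow> (b, c) \<in> R \<Longrightarrow> a = b"
    "(v, last ps) \<in> R\<^sup>*"
  shows "v \<in> set ps \<or> (v, hd ps) \<in> R\<^sup>*"
  using assms(1,2,4)
proof (induction ps rule: rev_induct)
  case Nil then show ?case by simp
next
  case (snoc x ps)
  show ?case
  proof (cases "ps = []")
    case True then show ?thesis using snoc by simp
  next
    case False
    have sp: "successively (\<lambda>a b. (a, b) \<in> R) ps" and px: "(last ps, x) \<in> R"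
      using snoc.prems(1) False by (auto simp: successively_append_iff)
    from snoc.prems(3) have "(v, x) \<in> R\<^sup>*" by simp
    then show ?thesis
    proof (cases rule: rtranclE)
      case base then show ?thesis by simp
    next
      case (step u)
      then have "u = last ps" using assms(3) px by blast
      then have "v \<in> set ps \<or> (v, hd ps) \<in> R\<^sup>*" using snoc.IH[OF sp False] step by simp
      then show ?thesis using False by auto
    qed
  qed
qed

lemma comparable:
  assumes "\<And>a b c. (a, c) \<in> R \<Longrightarrow> (b, c) \<in> R \<Longrightarrow> a = b"
    "(x, p) \<in> R\<^sup>*" "(y, p) \<in> R\<^sup>*"
  shows "(x, y) \<in> R\<^sup>* \<or> (y, x) \<in> R\<^sup>*"
  using assms(2,3)
proof (induction arbitrary: y rule: rtrancl_induct)
  case base then show ?case by simp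
next
  case (step q p)
  from step.prems show ?case
  proof (cases rule: rtranclE)
    case base then show ?thesis using step by (meson rtrancl.rtrancl_into_rtrancl)
  next
    case (step q')
    then have "q' = q" using assms(1) \<open>(q, p) \<in> R\<close> by blast
    then show ?thesis using step.IH step by blast
  qed
qed

lemma card_in_sum:
  assumes "finite W" "\<And>v. v \<in> W \<Longrightarrow> finite {u. (u, v) \<in> R}"
  shows "card {(u, v) \<in> R. v \<in> W} = (\<Sum>v\<in>W. card {u. (u, v) \<in> R})"
proof -
  have "{(u, v) \<in> R. v \<in> W} = (\<lambda>(v, u). (u, v)) ` (SIGMA v:W. {u. (u, v) \<in> R})" by force
  moreover have "inj_on (\<lambda>(v, u). (u, v)) (SIGMA v:W. {u. (u, v) \<in> R})" by (auto simp: inj_on_def)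
  ultimately have "card {(u, v) \<in> R. v \<in> W} = card (SIGMA v:W. {u. (u, v) \<in> R})"
    by (simp add: card_image)
  then show ?thesis using assms by simp
qed

lemma card_out_sum:
  assumes "finite W" "\<And>v. v \<in> W \<Longrightarrow> finite {u. (v, u) \<in> R}"
  shows "card {(v, u) \<in> R. v \<in> W} = (\<Sum>v\<in>W. card {u. (v, u) \<in> R})"
proof -
  have "{(v, u) \<in> R. v \<in> W} = (SIGMA v:W. {u. (v, u) \<in> R})" by force
  then show ?thesis using assms by simp
qed

context net begin

definition Ap where "Ap = {(u, v) \<in> A. \<not> hyb v}"

lemma Ap_unique: "(a, c) \<in> Ap \<Longrightarrow> (b, c) \<in> Ap \<Longrightarrow> a = b"
  unfolding Ap_def using nonhyb_unique_parent by blast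

lemma Ap_sub: "Ap \<subseteq> A" unfolding Ap_def by auto

definition Seg where "Seg s p = {v. (s, v) \<in> Ap\<^sup>* \<and> (v, p) \<in> Ap\<^sup>*}"

definition struct where
  "struct h ys L1 s L2 \<longleftrightarrow> ucycle A (h # ys) \<and> hyb h \<and> h \<in> V \<and> (hd ys, h) \<in> A \<and> (last ys, h) \<in> A
     \<and> ys = L1 @ s # L2 \<and> successively (\<lambda>a b. (b, a) \<in> A) (L1 @ [s])
     \<and> successively (\<lambda>a b. (a, b) \<in> A) (s # L2)"

lemma struct_exists:
  assumes "ucycle A cs"
  shows "\<exists>h ys L1 s L2. struct h ys L1 s L2 \<and> set (h # ys) = set cs \<and> cycle_arcs A (h # ys) = cycle_arcs A cs"
proof -
  obtain h ys where hy: "ucycle A (h # ys)" "set (h # ys) = set cs" "cycle_arcs A (h # ys) = cycle_arcs A cs"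
     "(hd ys, h) \<in> A" "(last ys, h) \<in> A" "hyb h" "h \<in> V"
    using sink[OF assms] by blast
  have l: "2 \<le> length ys" "distinct (h # ys)" "successively (uadj A) (h # ys @ [h])"
    using hy(1) unfolding ucycle_Cons by auto
  have ne: "ys \<noteq> []" using l by auto
  have "successively (uadj A) ((h # ys) @ [h])" using l(3) by simp
  then have "successively (uadj A) (h # ys)" by (simp only: successively_append_iff)
  then have sy: "successively (uadj A) ys" using ne by (simp add: successively_Cons)
  have nh: "\<not> hyb v" if "v \<in> set ys" for v
    using cyc_hyb_unique[OF hy(1), of v h] that hy(6) l(2) by auto
  have "\<forall>v\<in>set ys. \<forall>a b. (a, v) \<in> A \<longrightarrow> (b, v) \<in> A \<longrightarrow> a = b"
    using nh nonhyb_unique_parent by blast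
  moreover have "successively (\<lambda>a b. (a, b) \<in> A \<or> (b, a) \<in> A) ys"
    using sy unfolding uadj_def .
  ultimately obtain L1 s L2 where "ys = L1 @ s # L2" "successively (\<lambda>a b. (b, a) \<in> A) (L1 @ [s])"
      "successively (\<lambda>a b. (a, b) \<in> A) (s # L2)"
    using orient[of A ys] l(2) ne by auto
  then show ?thesis using hy unfolding struct_def by blast
qed

context
  fixes h ys L1 s L2
  assumes st: "struct h ys L1 s L2"
begin

lemma st_basic: "ucycle A (h # ys)" "hyb h" "h \<in> V" "(hd ys, h) \<in> A" "(last ys, h) \<in> A"
  "ys = L1 @ s # L2" "successively (\<lambda>a b. (b, a) \<in> A) (L1 @ [s])"
  "successively (\<lambda>a b. (a, b) \<in> A) (s # L2)"
  using st unfolding struct_def by auto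

lemma st_l: "2 \<le> length ys" "distinct (h # ys)" "successively (uadj A) (h # ys @ [h])"
  using st_basic(1) unfolding ucycle_Cons by auto

lemma st_ne: "ys \<noteq> []" using st_l by auto

lemma st_nh: "v \<in> set ys \<Longrightarrow> \<not> hyb v"
  using cyc_hyb_unique[OF st_basic(1), of v h] st_basic(2) st_l(2) by auto

lemma st_p12: "hd ys \<noteq> last ys"
proof
  assume "hd ys = last ys"
  moreover obtain y ys' where "ys = y # ys'" using st_ne by (cases ys) auto
  moreover have "ys' \<noteq> []" using st_l(1) calculation(2) by auto
  ultimately show False using st_l(2) by (metis distinct.simps(2) last.simps last_in_set list.sel(1))
qed

definition D1 where "D1 = s # rev L1"
definition D2 where "D2 = s # L2"

lemma D1_walk: "successively (\<lambda>a b. (a, b) \<in> A) D1"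
proof -
  have "successively (\<lambda>a b. (a, b) \<in> A) (rev (L1 @ [s]))" unfolding successively_rev using st_basic(7) by simp
  then show ?thesis unfolding D1_def by (simp del: successively_rev)
qed

lemma D1_last: "last D1 = hd ys"
  unfolding D1_def using st_basic(6) by (cases L1) (auto simp: last_rev)

lemma D2_last: "last D2 = last ys"
  unfolding D2_def using st_basic(6) by simp

lemma D_set: "set D1 \<union> set D2 = set ys" "set D1 \<inter> set D2 = {s}"
proof -
  show "set D1 \<union> set D2 = set ys" unfolding D1_def D2_def using st_basic(6) by auto
  have "distinct ys" using st_l(2) by simp
  then show "set D1 \<inter> set D2 = {s}" unfolding D1_def D2_def using st_basic(6) by auto
qed

lemma Ap_walk:
  assumes "successively (\<lambda>a b. (a, b) \<in> A) D" "set D \<subseteq> set ys"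
  shows "successively (\<lambda>a b. (a, b) \<in> Ap) D"
  using assms(1) by (rule successively_mono) (use assms(2) st_nh in \<open>auto simp: Ap_def\<close>)

lemma D1_Ap: "successively (\<lambda>a b. (a, b) \<in> Ap) D1"
  using Ap_walk[OF D1_walk] D_set(1) by blast

lemma D2_Ap: "successively (\<lambda>a b. (a, b) \<in> Ap) D2"
  using Ap_walk[OF st_basic(8)[folded D2_def]] D_set(1) by blast

lemma seg_eq:
  assumes "successively (\<lambda>a b. (a, b) \<in> Ap) D" "D \<noteq> []" "hd D = s"
  shows "Seg s (last D) = set D"
proof
  show "set D \<subseteq> Seg s (last D)" using walk_reach[OF assms(1)] assms(3) unfolding Seg_def by auto
  show "Seg s (last D) \<subseteq> set D"
  proof
    fix v assume "v \<in> Seg s (last D)"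
    then have sv: "(s, v) \<in> Ap\<^sup>*" and vl: "(v, last D) \<in> Ap\<^sup>*" unfolding Seg_def by auto
    have "v \<in> set D \<or> (v, s) \<in> Ap\<^sup>*" using anc_path[OF assms(1,2) Ap_unique vl] assms(3) by simp
    moreover have "(v, s) \<in> Ap\<^sup>* \<Longrightarrow> v = s"
    proof (rule ccontr)
      assume "(v, s) \<in> Ap\<^sup>*" "v \<noteq> s"
      then have "(v, s) \<in> Ap\<^sup>+" by (meson rtranclD)
      then have "(v, s) \<in> A\<^sup>+" using trancl_mono Ap_sub by blast
      moreover have "(s, v) \<in> A\<^sup>*" using sv rtrancl_mono Ap_sub by blast
      ultimately show False using acyc_plus by blast
    qed
    ultimately show "v \<in> set D" using assms(2,3) by auto
  qed
qed

lemma st_W: "set (h # ys) = insert h (Seg s (hd ys) \<union> Seg s (last ys))"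
  using seg_eq[OF D1_Ap] seg_eq[OF D2_Ap] D1_last D2_last D_set(1) unfolding D1_def D2_def by auto

lemma st_inter: "Seg s (hd ys) \<inter> Seg s (last ys) = {s}"
  using seg_eq[OF D1_Ap] seg_eq[OF D2_Ap] D1_last D2_last D_set(2) unfolding D1_def D2_def by auto

lemma s_reach: "v \<in> set (h # ys) \<Longrightarrow> (s, v) \<in> A\<^sup>*"
proof -
  assume v: "v \<in> set (h # ys)"
  have 1: "(s, w) \<in> A\<^sup>*" if "w \<in> set ys" for w
  proof -
    have "w \<in> set D1 \<or> w \<in> set D2" using that D_set(1) by auto
    then show ?thesis using walk_reach[OF D1_walk] walk_reach[OF st_basic(8)] unfolding D1_def D2_def
      by auto
  qed
  show ?thesis
  proof (cases "v = h")
    case True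
    have "(s, hd ys) \<in> A\<^sup>*" using 1 st_ne by simp
    then show ?thesis using True st_basic(4) by (meson rtrancl.rtrancl_into_rtrancl)
  next
    case False then show ?thesis using v 1 by simp
  qed
qed

lemma pr_big: "pr (h # ys @ [h]) = {(h, hd ys)} \<union> pr ys \<union> {(last ys, h)}"
  using cp_Cons[OF st_ne, of h] unfolding cp_def by simp

lemma pr_L1: "pr (L1 @ [s]) \<subseteq> pr ys"
  using pr_mono_app1[of "L1 @ [s]" L2] st_basic(6) by simp

lemma pr_L2: "pr (s # L2) \<subseteq> pr ys"
  using pr_mono_app2[of "s # L2" L1] st_basic(6) by simp

lemma parent_in:
  assumes "v \<in> set ys" "v \<noteq> s"
  shows "\<exists>w. (w, v) \<in> A \<and> ((w, v) \<in> pr ys \<or> (v, w) \<in> pr ys)"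
proof -
  have "v \<in> set L1 \<or> v \<in> set L2" using assms st_basic(6) by auto
  then show ?thesis
  proof
    assume "v \<in> set L1"
    then have "v \<in> set (L1 @ [s])" "v \<noteq> last (L1 @ [s])" using st_l(2) st_basic(6) by auto
    then show ?thesis using walk_succ[OF st_basic(7)] pr_L1 by blast
  next
    assume "v \<in> set L2"
    then have "v \<in> set (s # L2)" "v \<noteq> hd (s # L2)" using st_l(2) st_basic(6) by auto
    then show ?thesis using walk_pred[OF st_basic(8)] pr_L2 by blast
  qed
qed

lemma no_chords: "A \<inter> (set (h # ys) \<times> set (h # ys)) = cycle_arcs A (h # ys)"
proof
  show "cycle_arcs A (h # ys) \<subseteq> A \<inter> (set (h # ys) \<times> set (h # ys))"
    using cycle_arcs_sub cycle_arcs_verts by blast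
  show "A \<inter> (set (h # ys) \<times> set (h # ys)) \<subseteq> cycle_arcs A (h # ys)"
  proof
    fix a assume a: "a \<in> A \<inter> (set (h # ys) \<times> set (h # ys))"
    then obtain u v where uv: "a = (u, v)" "(u, v) \<in> A" "u \<in> set (h # ys)" "v \<in> set (h # ys)" by auto
    have "(u, v) \<in> pr (h # ys @ [h]) \<or> (v, u) \<in> pr (h # ys @ [h])"
    proof (cases "v = h")
      case True
      then have "u = hd ys \<or> u = last ys"
        using hyb_parents[OF st_basic(2,3,4,5) st_p12] uv by blast
      then show ?thesis using pr_big True by auto
    next
      case False
      then have vy: "v \<in> set ys" using uv by simp
      show ?thesis
      proof (cases "v = s")
        case True
        have "(s, u) \<in> A\<^sup>*" using s_reach uv by blast
        then show ?thesis using acyc_star uv True by blast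
      next
        case False
        obtain w where "(w, v) \<in> A" "(w, v) \<in> pr ys \<or> (v, w) \<in> pr ys" using parent_in[OF vy False] by blast
        moreover have "w = u" using nonhyb_unique_parent[OF st_nh[OF vy]] uv calculation(1) by blast
        ultimately show ?thesis using pr_big by auto
      qed
    qed
    then show "a \<in> cycle_arcs A (h # ys)" using uv unfolding cycle_arcs_Cons by blast
  qed
qed

lemma card_W: "card (A \<inter> (set (h # ys) \<times> set (h # ys))) = card (set (h # ys))"
proof -
  define W where "W = set (h # ys)"
  have finW: "finite W" unfolding W_def by simp
  have eq: "A \<inter> (W \<times> W) = {(u, v) \<in> A \<inter> (W \<times> W). v \<in> W}" by auto
  have "card (A \<inter> (W \<times> W)) = (\<Sum>v\<in>W. card {u. (u, v) \<in> A \<inter> (W \<times> W)})"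
    using card_in_sum[OF finW, of "A \<inter> (W \<times> W)"] finW eq
    by (metis (no_types, lifting) finite_subset mem_Collect_eq mem_Sigma_iff subsetI Int_iff)
  also have "\<dots> = (\<Sum>v\<in>W. card {u\<in>W. (u, v) \<in> A})"
  proof (intro sum.cong refl)
    fix v assume "v \<in> W"
    then have "{u. (u, v) \<in> A \<inter> (W \<times> W)} = {u\<in>W. (u, v) \<in> A}" by auto
    then show "card {u. (u, v) \<in> A \<inter> (W \<times> W)} = card {u\<in>W. (u, v) \<in> A}" by simp
  qed
  finally have c: "card (A \<inter> (W \<times> W)) = (\<Sum>v\<in>W. card {u\<in>W. (u, v) \<in> A})" .
  have hs: "h \<noteq> s" using st_l(2) st_basic(6) by auto
  have sW: "s \<in> W" "h \<in> W" unfolding W_def using st_basic(6) by auto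
  have fh: "card {u\<in>W. (u, h) \<in> A} = 2"
  proof -
    have "{u\<in>W. (u, h) \<in> A} = {hd ys, last ys}"
      using hyb_parents[OF st_basic(2,3,4,5) st_p12] st_basic(4,5) st_ne unfolding W_def by auto
    then show ?thesis using st_p12 by simp
  qed
  have fs: "card {u\<in>W. (u, s) \<in> A} = 0"
  proof -
    have "{u\<in>W. (u, s) \<in> A} = {}"
      using s_reach acyc_star unfolding W_def by blast
    then show ?thesis by (simp only: card.empty)
  qed
  have f1: "card {u\<in>W. (u, v) \<in> A} = 1" if "v \<in> W - {h, s}" for v
  proof -
    have vy: "v \<in> set ys" "v \<noteq> s" using that unfolding W_def by auto
    obtain w where w: "(w, v) \<in> A" "(w, v) \<in> pr ys \<or> (v, w) \<in> pr ys" using parent_in[OF vy] by blast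
    then have "w \<in> set ys" using pr_sub_set[of w v ys] pr_sub_set[of v w ys] by blast
    then have "{u\<in>W. (u, v) \<in> A} = {w}"
      using w nonhyb_unique_parent[OF st_nh[OF vy(1)]] unfolding W_def by auto
    then show ?thesis by simp
  qed
  have "(\<Sum>v\<in>W. card {u\<in>W. (u, v) \<in> A}) =
     card {u\<in>W. (u, h) \<in> A} + (card {u\<in>W. (u, s) \<in> A} + (\<Sum>v\<in>W - {h, s}. card {u\<in>W. (u, v) \<in> A}))"
  proof -
    have "(\<Sum>v\<in>W. card {u\<in>W. (u, v) \<in> A}) = card {u\<in>W. (u, h) \<in> A} + (\<Sum>v\<in>W - {h}. card {u\<in>W. (u, v) \<in> A})"
      using sum.remove[OF finW sW(2)] .
    moreover have "(\<Sum>v\<in>W - {h}. card {u\<in>W. (u, v) \<in> A}) = card {u\<in>W. (u, s) \<in> A} + (\<Sum>v\<in>W - {h} - {s}. card {u\<in>W. (u, v) \<in> A})"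
      using sum.remove[of "W - {h}" s] finW sW hs by blast
    moreover have "W - {h} - {s} = W - {h, s}" by auto
    ultimately show ?thesis by simp
  qed
  also have "\<dots> = 2 + card (W - {h, s})" using fh fs f1 by simp
  also have "\<dots> = card W"
  proof -
    have "card (W - {h, s}) = card W - card {h, s}" using sW finW by (intro card_Diff_subset) auto
    moreover have "card {h, s} = 2" using hs by simp
    moreover have "card {h, s} \<le> card W" using sW finW by (intro card_mono) auto
    ultimately show ?thesis by simp
  qed
  finally show ?thesis using c unfolding W_def by simp
qed

end

end


context net begin

lemma blk_hyb_unique:
  assumes "B \<in> blocks A" "v \<in> block_verts B" "w \<in> block_verts B" "hyb v" "hyb w"
  shows "v = w"
proof -
  have c: "card {v \<in> block_verts B. hyb v} \<le> 1" using lev1 assms(1) by blast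
  have "B \<subseteq> A" using assms(1) unfolding blocks_def by auto
  then have "block_verts B \<subseteq> V" unfolding block_verts_def using AV by auto
  then have fin: "finite {v \<in> block_verts B. hyb v}"
    using finV finite_subset by (metis (no_types, lifting) mem_Collect_eq subsetI)
  show ?thesis
  proof (rule ccontr)
    assume "v \<noteq> w"
    have "{v, w} \<subseteq> {v \<in> block_verts B. hyb v}" using assms by auto
    then have "card {v, w} \<le> card {v \<in> block_verts B. hyb v}"
      using card_mono[OF fin] by blast
    then show False using c \<open>v \<noteq> w\<close> by simp
  qed
qed

lemma samehyb:
  assumes c1: "ucycle A cs1" and c2: "ucycle A cs2" and h: "hyb h" "h \<in> set cs1" "h \<in> set cs2"
  shows "set cs1 = set cs2 \<and> cycle_arcs A cs1 = cycle_arcs A cs2"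
proof -
  obtain h1 ys1 La s1 Lb where st1: "struct h1 ys1 La s1 Lb" and e1: "set (h1 # ys1) = set cs1"
      "cycle_arcs A (h1 # ys1) = cycle_arcs A cs1"
    using struct_exists[OF c1] by blast
  obtain h2 ys2 Lc s2 Ld where st2: "struct h2 ys2 Lc s2 Ld" and e2: "set (h2 # ys2) = set cs2"
      "cycle_arcs A (h2 # ys2) = cycle_arcs A cs2"
    using struct_exists[OF c2] by blast
  have "h1 = h" using cyc_hyb_unique[OF c1, of h1 h] st_basic(2)[OF st1] e1(1) h by auto
  have "h2 = h" using cyc_hyb_unique[OF c2, of h2 h] st_basic(2)[OF st2] e2(1) h by auto
  define q1 where "q1 = hd ys1"
  define q2 where "q2 = last ys1"
  have q12: "q1 \<noteq> q2" using st_p12[OF st1] unfolding q1_def q2_def .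
  have hV: "h \<in> V" using st_basic(3)[OF st1] \<open>h1 = h\<close> by simp
  have qa: "(q1, h) \<in> A" "(q2, h) \<in> A" using st_basic(4,5)[OF st1] \<open>h1 = h\<close> unfolding q1_def q2_def by auto
  have pa: "(hd ys2, h) \<in> A" "(last ys2, h) \<in> A" using st_basic(4,5)[OF st2] \<open>h2 = h\<close> by auto
  have "hd ys2 = q1 \<or> hd ys2 = q2" "last ys2 = q1 \<or> last ys2 = q2"
    using hyb_parents[OF h(1) hV qa q12] pa by auto
  moreover have "hd ys2 \<noteq> last ys2" using st_p12[OF st2] .
  ultimately have par: "(hd ys2 = q1 \<and> last ys2 = q2) \<or> (hd ys2 = q2 \<and> last ys2 = q1)" by auto
  have W1: "set cs1 = insert h (Seg s1 q1 \<union> Seg s1 q2)" "Seg s1 q1 \<inter> Seg s1 q2 = {s1}"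
    using st_W[OF st1] st_inter[OF st1] e1 \<open>h1 = h\<close> unfolding q1_def q2_def by auto
  have W2: "set cs2 = insert h (Seg s2 q1 \<union> Seg s2 q2)" "Seg s2 q1 \<inter> Seg s2 q2 = {s2}"
    using st_W[OF st2] st_inter[OF st2] e2 \<open>h2 = h\<close> par by auto
  have key: "s = s'" if "Seg s q1 \<inter> Seg s q2 = {s}" "Seg s' q1 \<inter> Seg s' q2 = {s'}" "(s, s') \<in> Ap\<^sup>*"
    for s s'
  proof -
    have "s' \<in> Seg s' q1" "s' \<in> Seg s' q2" using that(2) by auto
    then have "(s', q1) \<in> Ap\<^sup>*" "(s', q2) \<in> Ap\<^sup>*" unfolding Seg_def by auto
    then have "s' \<in> Seg s q1 \<inter> Seg s q2" using that(3) unfolding Seg_def by auto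
    then show ?thesis using that(1) by auto
  qed
  have "s1 \<in> Seg s1 q1" "s2 \<in> Seg s2 q1" using W1(2) W2(2) by auto
  then have "(s1, q1) \<in> Ap\<^sup>*" "(s2, q1) \<in> Ap\<^sup>*" unfolding Seg_def by auto
  then have "(s1, s2) \<in> Ap\<^sup>* \<or> (s2, s1) \<in> Ap\<^sup>*" by (intro comparable[OF Ap_unique])
  then have "s1 = s2"
  proof
    assume "(s1, s2) \<in> Ap\<^sup>*" then show ?thesis using key[OF W1(2) W2(2)] by simp
  next
    assume "(s2, s1) \<in> Ap\<^sup>*" then show ?thesis using key[OF W2(2) W1(2)] by simp
  qed
  then have sets: "set cs1 = set cs2" using W1 W2 by simp
  have "cycle_arcs A cs1 = A \<inter> (set cs1 \<times> set cs1)" using no_chords[OF st1, unfolded e1] by simp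
  moreover have "cycle_arcs A cs2 = A \<inter> (set cs2 \<times> set cs2)" using no_chords[OF st2, unfolded e2] by simp
  ultimately show ?thesis using sets by simp
qed

lemma cyc_has_hyb: "ucycle A cs \<Longrightarrow> \<exists>h \<in> set cs. hyb h"
  using sink by (metis list.set_intros(1))

definition blk where "blk e = {f \<in> A. same_block A e f}"

lemma blk_blocks: "e \<in> A \<Longrightarrow> blk e \<in> blocks A" unfolding blk_def blocks_def by blast

lemma core:
  assumes "ucycle A cs1" "ucycle A cs2" "e \<in> cycle_arcs A cs1" "e \<in> cycle_arcs A cs2"
  shows "cycle_arcs A cs1 = cycle_arcs A cs2"
proof -
  obtain h1 h2 where h: "h1 \<in> set cs1" "hyb h1" "h2 \<in> set cs2" "hyb h2"
    using cyc_has_hyb assms(1,2) by blast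
  have eA: "e \<in> A" using assms(3) cycle_arcs_sub by blast
  have "block_verts (cycle_arcs A cs1) \<subseteq> block_verts (blk e)"
    "block_verts (cycle_arcs A cs2) \<subseteq> block_verts (blk e)"
    using cycle_in_block[OF assms(3,1)] cycle_in_block[OF assms(4,2)] unfolding blk_def block_verts_def
    by auto
  then have "h1 \<in> block_verts (blk e)" "h2 \<in> block_verts (blk e)"
    using block_verts_cycle[OF assms(1)] block_verts_cycle[OF assms(2)] h by auto
  then have "h1 = h2" using blk_hyb_unique[OF blk_blocks[OF eA]] h by blast
  then show ?thesis using samehyb[OF assms(1,2) h(2)] h by blast
qed

definition Oc where "Oc = {a. \<exists>cs. ucycle A cs \<and> a \<in> cycle_arcs A cs}"

lemma Oc_sub: "Oc \<subseteq> A" unfolding Oc_def using cycle_arcs_sub by blast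

lemma blk_cycle:
  assumes "ucycle A cs" "e \<in> cycle_arcs A cs"
  shows "blk e = cycle_arcs A cs"
proof
  show "cycle_arcs A cs \<subseteq> blk e" using cycle_in_block[OF assms(2,1)] unfolding blk_def .
  show "blk e \<subseteq> cycle_arcs A cs"
  proof
    fix f assume "f \<in> blk e"
    then have "f = e \<or> (\<exists>cs'. ucycle A cs' \<and> e \<in> cycle_arcs A cs' \<and> f \<in> cycle_arcs A cs')"
      unfolding blk_def same_block_def by auto
    then show "f \<in> cycle_arcs A cs" using assms core by blast
  qed
qed

lemma blk_nocycle: "e \<in> A \<Longrightarrow> e \<notin> Oc \<Longrightarrow> blk e = {e}"
  unfolding blk_def same_block_def Oc_def by auto

lemma card_cycle_arcs:
  assumes "ucycle A cs" shows "card (cycle_arcs A cs) = length cs"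
proof -
  obtain h ys L1 s L2 where st: "struct h ys L1 s L2" and e: "set (h # ys) = set cs"
      "cycle_arcs A (h # ys) = cycle_arcs A cs"
    using struct_exists[OF assms] by blast
  have "card (cycle_arcs A cs) = card (set cs)" using card_W[OF st] no_chords[OF st] e by simp
  also have "\<dots> = length cs" using assms unfolding ucycle_def by (simp add: distinct_card)
  finally show ?thesis .
qed

lemma galls_eq: "galls A = {cycle_arcs A cs | cs. ucycle A cs}"
proof
  show "galls A \<subseteq> {cycle_arcs A cs | cs. ucycle A cs}"
  proof
    fix C assume "C \<in> galls A"
    then obtain e where e: "e \<in> A" "C = blk e" "card C > 1" unfolding galls_def blocks_def blk_def by auto
    show "C \<in> {cycle_arcs A cs | cs. ucycle A cs}"
    proof (cases "e \<in> Oc")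
      case True
      then obtain cs where "ucycle A cs" "e \<in> cycle_arcs A cs" unfolding Oc_def by blast
      then show ?thesis using blk_cycle e by blast
    next
      case False then show ?thesis using blk_nocycle e by simp
    qed
  qed
  show "{cycle_arcs A cs | cs. ucycle A cs} \<subseteq> galls A"
  proof
    fix C assume "C \<in> {cycle_arcs A cs | cs. ucycle A cs}"
    then obtain cs where cs: "ucycle A cs" "C = cycle_arcs A cs" by blast
    obtain e where e: "e \<in> cycle_arcs A cs" using cycle_arcs_nonempty[OF cs(1)] by blast
    have "C \<in> blocks A" using blk_blocks[of e] blk_cycle[OF cs(1) e] cs(2) e cycle_arcs_sub by auto
    moreover have "card C > 1" using card_cycle_arcs[OF cs(1)] cyc4[OF cs(1)] cs(2) by simp
    ultimately show "C \<in> galls A" unfolding galls_def by blast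
  qed
qed

lemma galls_disjoint: "C1 \<in> galls A \<Longrightarrow> C2 \<in> galls A \<Longrightarrow> C1 \<noteq> C2 \<Longrightarrow> C1 \<inter> C2 = {}"
  unfolding galls_eq using core by blast

lemma galls_union: "\<Union> (galls A) = Oc"
  unfolding galls_eq Oc_def by blast

lemma finite_galls: "finite (galls A)"
proof -
  have "galls A \<subseteq> Pow A" unfolding galls_eq using cycle_arcs_sub by blast
  then show ?thesis using finA by (meson finite_Pow_iff finite_subset)
qed

lemma card_Oc: "card Oc = (\<Sum>C\<in>galls A. card C)"
proof -
  have "\<forall>C\<in>galls A. finite C"
  proof
    fix C assume "C \<in> galls A"
    then have "C \<subseteq> A" unfolding galls_eq using cycle_arcs_sub by blast
    then show "finite C" using finA finite_subset by blast
  qed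
  then have "card (\<Union> (galls A)) = (\<Sum>C\<in>galls A. card C)"
  proof -
    have pw: "pairwise disjnt (galls A)" using galls_disjoint unfolding pairwise_def disjnt_def by blast
    show ?thesis using card_Union_disjoint[OF pw] \<open>\<forall>C\<in>galls A. finite C\<close> by simp
  qed
  then show ?thesis using galls_union by simp
qed

lemma gall_card4: "C \<in> galls A \<Longrightarrow> card C \<ge> 4"
  unfolding galls_eq using card_cycle_arcs cyc4 by auto

end


context net begin

lemma hyb_on_cycle:
  assumes hV: "h \<in> V" and hh: "hyb h"
  shows "\<exists>cs. ucycle A cs \<and> h \<in> set cs"
proof -
  have "card {u. (u, h) \<in> A} = 2" using hyb2[OF hV hh] unfolding indeg_def by simp
  then obtain p1 p2 where p: "{u. (u, h) \<in> A} = {p1, p2}" "p1 \<noteq> p2" by (meson card_2_iff)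
  then have pa: "(p1, h) \<in> A" "(p2, h) \<in> A" by auto
  define CA where "CA = {t. (t, p1) \<in> A\<^sup>* \<and> (t, p2) \<in> A\<^sup>*}"
  have "r \<in> CA" unfolding CA_def using reach arcV pa by blast
  have wf: "wf ((A\<^sup>+)\<inverse>)"
    using wf_trancl[OF finite_acyclic_wf_converse[OF finA acyc]] by (simp add: trancl_converse)
  obtain s where s: "s \<in> CA" "\<And>t. (t, s) \<in> (A\<^sup>+)\<inverse> \<Longrightarrow> t \<notin> CA"
    using wfE_min[OF wf \<open>r \<in> CA\<close>] by metis
  have sp: "(s, p1) \<in> A\<^sup>*" "(s, p2) \<in> A\<^sup>*" using s(1) unfolding CA_def by auto
  obtain P1 where P1: "P1 \<noteq> []" "hd P1 = s" "last P1 = p1" "distinct P1"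
      "successively (\<lambda>a b. (a, b) \<in> A) P1"
    using simple_walk_exists[OF sp(1)] by blast
  obtain P2 where P2: "P2 \<noteq> []" "hd P2 = s" "last P2 = p2" "distinct P2"
      "successively (\<lambda>a b. (a, b) \<in> A) P2"
    using simple_walk_exists[OF sp(2)] by blast
  define ys where "ys = rev P2 @ tl P1"
  have inCA: "v \<in> CA" if "v \<in> set P1" "v \<in> set P2" for v
    using walk_reach[OF P1(5) that(1)] walk_reach[OF P2(5) that(2)] P1(3) P2(3) unfolding CA_def by auto
  have disj: "set P2 \<inter> set (tl P1) = {}"
  proof (rule ccontr)
    assume "set P2 \<inter> set (tl P1) \<noteq> {}"
    then obtain v where v: "v \<in> set P2" "v \<in> set (tl P1)" by blast
    obtain x Q1 where P1e: "P1 = x # Q1" using P1(1) by (cases P1) auto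
    then have "x = s" "v \<in> set Q1" using P1(2) v(2) by auto
    then have "v \<noteq> s" "v \<in> set P1" using P1(4) P1e by auto
    moreover have "(s, v) \<in> A\<^sup>*" using walk_reach[OF P1(5) \<open>v \<in> set P1\<close>] P1(2) by simp
    ultimately have "(s, v) \<in> A\<^sup>+" by (metis rtranclD)
    then have "v \<notin> CA" using s(2) by blast
    then show False using inCA \<open>v \<in> set P1\<close> v(1) by blast
  qed
  have hnot: "h \<notin> set P1" "h \<notin> set P2"
  proof -
    show "h \<notin> set P1"
    proof
      assume "h \<in> set P1"
      then have "(h, p1) \<in> A\<^sup>*" using walk_reach[OF P1(5)] P1(3) by auto
      then show False using acyc_star pa by blast
    qed
    show "h \<notin> set P2"
    proof
      assume "h \<in> set P2"
      then have "(h, p2) \<in> A\<^sup>*" using walk_reach[OF P2(5)] P2(3) by auto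
      then show False using acyc_star pa by blast
    qed
  qed
  have tlsub: "set (tl P1) \<subseteq> set P1" using P1(1) by (cases P1) auto
  have dys: "distinct (h # ys)"
    unfolding ys_def using P1(4) P2(4) disj hnot tlsub by (auto simp: distinct_tl)
  have lys: "2 \<le> length ys"
  proof (rule ccontr)
    assume "\<not> 2 \<le> length ys"
    then have "length P2 + length (tl P1) \<le> 1" unfolding ys_def by simp
    moreover have "length P2 \<ge> 1" using P2(1) by (cases P2) auto
    ultimately have l1: "length P2 = 1" and l2: "length (tl P1) = 0" by linarith+
    have "P2 = [s]"
    proof (cases P2)
      case Nil then show ?thesis using P2(1) by simp
    next
      case (Cons x Q) then show ?thesis using l1 P2(2) by simp
    qed
    moreover have "P1 = [s]" using l2 P1(1,2) by (metis hd_Cons_tl length_0_conv)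
    ultimately show False using P1(3) P2(3) p(2) by simp
  qed
  have hd_ys: "hd ys = p2" unfolding ys_def using P2(1,3) by (simp add: hd_rev)
  have last_ys: "last ys = p1"
  proof (cases "tl P1 = []")
    case True
    then have "P1 = [s]" using P1(1,2) by (metis hd_Cons_tl)
    then show ?thesis unfolding ys_def using True P2(1,2) P1(3) by (simp add: last_rev)
  next
    case False
    then show ?thesis unfolding ys_def using P1(1,3) by (simp add: last_tl)
  qed
  have sym: "uadj A a b = uadj A b a" for a b unfolding uadj_def by auto
  have w2: "successively (uadj A) (rev P2)"
    using P2(5) by (simp add: successively_mono uadj_def)
  have w1: "successively (uadj A) (tl P1)"
  proof -
    have "successively (uadj A) P1" using P1(5) by (rule successively_mono) (auto simp: uadj_def)
    then show ?thesis using P1(1) by (cases P1) (auto simp: successively_Cons)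
  qed
  have junc: "tl P1 = [] \<or> uadj A (last (rev P2)) (hd (tl P1))"
  proof (cases "tl P1 = []")
    case False
    then obtain x y Q where "P1 = x # y # Q" using P1(1) by (metis hd_Cons_tl)
    then have "(s, hd (tl P1)) \<in> A" using P1(2,5) by simp
    then show ?thesis using P2(1,2) by (simp add: last_rev uadj_def)
  qed simp
  have wys: "successively (uadj A) ys" unfolding ys_def successively_append_iff using w1 w2 junc by blast
  have "successively (uadj A) ([h] @ ys @ [h])"
  proof -
    have "ys \<noteq> []" using lys by auto
    then have "successively (uadj A) (ys @ [h])"
      unfolding successively_append_iff using wys pa(1) last_ys by (simp add: uadj_def)
    then show ?thesis unfolding successively_append_iff using pa(2) hd_ys \<open>ys \<noteq> []\<close>
      by (simp add: uadj_def)
  qed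
  then have "ucycle A (h # ys)" unfolding ucycle_Cons using dys lys by simp
  then show ?thesis by auto
qed

definition Hs where "Hs = {v \<in> V. hyb v}"

definition cyc_of where "cyc_of h = (SOME cs. ucycle A cs \<and> h \<in> set cs)"

lemma cyc_of: "h \<in> Hs \<Longrightarrow> ucycle A (cyc_of h) \<and> h \<in> set (cyc_of h)"
  unfolding cyc_of_def Hs_def using hyb_on_cycle by (metis (mono_tags, lifting) mem_Collect_eq someI_ex)

lemma galls_Hs: "galls A = (\<lambda>h. cycle_arcs A (cyc_of h)) ` Hs"
proof
  show "(\<lambda>h. cycle_arcs A (cyc_of h)) ` Hs \<subseteq> galls A" unfolding galls_eq using cyc_of by blast
  show "galls A \<subseteq> (\<lambda>h. cycle_arcs A (cyc_of h)) ` Hs"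
  proof
    fix C assume "C \<in> galls A"
    then obtain cs where cs: "ucycle A cs" "C = cycle_arcs A cs" unfolding galls_eq by blast
    obtain h where h: "h \<in> set cs" "hyb h" using cyc_has_hyb[OF cs(1)] by blast
    have hH: "h \<in> Hs" unfolding Hs_def using h cycle_arcs_verts verts_in_arcs[OF cs(1) h(1)] AV
      unfolding block_verts_def using cs(1) cycle_arcs_sub by fastforce
    have "cycle_arcs A cs = cycle_arcs A (cyc_of h)" using samehyb[OF cs(1) _ h(2) h(1)] cyc_of[OF hH] by blast
    then show "C \<in> (\<lambda>h. cycle_arcs A (cyc_of h)) ` Hs" using cs(2) hH by blast
  qed
qed

lemma inj_cyc_of: "inj_on (\<lambda>h. cycle_arcs A (cyc_of h)) Hs"
proof
  fix h1 h2 assume h: "h1 \<in> Hs" "h2 \<in> Hs" "cycle_arcs A (cyc_of h1) = cycle_arcs A (cyc_of h2)"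
  have c1: "ucycle A (cyc_of h1)" "h1 \<in> set (cyc_of h1)" using cyc_of h(1) by auto
  have c2: "ucycle A (cyc_of h2)" "h2 \<in> set (cyc_of h2)" using cyc_of h(2) by auto
  obtain e where e: "e \<in> cycle_arcs A (cyc_of h1)" using cycle_arcs_nonempty[OF c1(1)] by blast
  have B: "cycle_arcs A (cyc_of h1) \<in> blocks A"
    using blk_blocks[of e] blk_cycle[OF c1(1) e] e cycle_arcs_sub by auto
  have "h1 \<in> block_verts (cycle_arcs A (cyc_of h1))" using block_verts_cycle[OF c1(1)] c1(2) by simp
  moreover have "h2 \<in> block_verts (cycle_arcs A (cyc_of h1))"
    using block_verts_cycle[OF c2(1)] c2(2) h(3) by simp
  ultimately show "h1 = h2" using blk_hyb_unique[OF B] h(1,2) unfolding Hs_def by blast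
qed

lemma g_eq: "card (galls A) = card Hs"
  using galls_Hs inj_cyc_of card_image by metis

end


context net begin

lemma noncycle_cut:
  assumes aA: "a \<in> A" and aO: "a \<notin> Oc"
  shows "is_cut_arc V A a"
proof -
  obtain u w where a: "a = (u, w)" by (cases a)
  define B where "B = A - {a}"
  have uwV: "u \<in> V" "w \<in> V" using arcV aA a by auto
  show ?thesis unfolding is_cut_arc_def
  proof (intro conjI aA notI)
    assume "uconnected V (A - {a})"
    then have "\<forall>x\<in>V. \<forall>y\<in>V. (x, y) \<in> (B \<union> B\<inverse>)\<^sup>*" unfolding uconnected_def B_def .
    then have wu0: "(w, u) \<in> (B \<union> B\<inverse>)\<^sup>*" using uwV by simp
    obtain ps where ps: "ps \<noteq> []" "hd ps = w" "last ps = u" "distinct ps"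
        "successively (\<lambda>x y. (x, y) \<in> B \<union> B\<inverse>) ps"
      using simple_walk_exists[OF wu0] by blast
    obtain ys where pse: "ps = w # ys" using ps(1,2) by (cases ps) auto
    have wu: "w \<noteq> u" using noloop aA a by auto
    have yne: "ys \<noteq> []" using pse ps(3) wu by auto
    have lu: "last ys = u" using pse ps(3) yne by simp
    have "2 \<le> length ys"
    proof (rule ccontr)
      assume "\<not> 2 \<le> length ys"
      then have "ys = [u]" using yne lu by (cases ys) (auto simp: Suc_le_eq)
      then have "(w, u) \<in> B \<union> B\<inverse>" using ps(5) pse by simp
      then show False using notboth aA a unfolding B_def by auto
    qed
    moreover have "successively (uadj A) (w # ys @ [w])"
    proof -
      have "successively (\<lambda>x y. (x, y) \<in> B \<union> B\<inverse>) (w # ys)" using ps(5) pse by simp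
      then have "successively (uadj A) (w # ys)"
        by (rule successively_mono) (auto simp: uadj_def B_def)
      moreover have "uadj A (last (w # ys)) w" using lu yne aA a by (simp add: uadj_def)
      ultimately have "successively (uadj A) ((w # ys) @ [w])" unfolding successively_append_iff by simp
      then show ?thesis by simp
    qed
    ultimately have cyc: "ucycle A (w # ys)" unfolding ucycle_Cons using ps(4) pse by simp
    have "(u, w) \<in> pr (w # ys @ [w])"
      using pr_append[of "w # ys" "[w]"] lu yne by simp
    then have "a \<in> cycle_arcs A (w # ys)" unfolding cycle_arcs_Cons using aA a by blast
    then show False using aO cyc unfolding Oc_def by blast
  qed
qed

lemma cyc_front_cp:
  assumes "ucycle A cs" "y \<in> set cs"
  shows "\<exists>ys. ucycle A (y # ys) \<and> cp (y # ys) = cp cs"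
proof -
  obtain ys n where "rotate n cs = y # ys" using rotate_to_front[OF assms(2)] by blast
  then show ?thesis using ucycle_rotate[of A n cs] cp_rotate[of n cs] assms(1) by metis
qed

lemma cycle_not_cut:
  assumes cyc: "ucycle A cs" and a: "a \<in> cycle_arcs A cs"
  shows "\<not> is_cut_arc V A a"
proof -
  have cne: "cs \<noteq> []" using cyc unfolding ucycle_def by auto
  obtain x y where xy: "(x, y) \<in> cp cs" "a = (x, y) \<or> a = (y, x)" and aA: "a \<in> A"
    using a unfolding cycle_arcs_cp[OF cne] by blast
  have "y \<in> set cs" using pr_sub_set[of x y "cs @ [hd cs]"] xy(1) cne unfolding cp_def by auto
  then obtain ys where ys: "ucycle A (y # ys)" "cp (y # ys) = cp cs"
    using cyc_front_cp[OF cyc] by blast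
  have l: "2 \<le> length ys" "distinct (y # ys)" "successively (uadj A) (y # ys @ [y])"
    using ys(1) unfolding ucycle_Cons by auto
  have ne: "ys \<noteq> []" using l by auto
  have hl: "hd ys \<noteq> last ys"
  proof
    assume "hd ys = last ys"
    moreover obtain z ys' where "ys = z # ys'" using ne by (cases ys) auto
    moreover have "ys' \<noteq> []" using l(1) calculation(2) by auto
    ultimately show False using l(2) by (metis distinct.simps(2) last.simps last_in_set list.sel(1))
  qed
  have yn: "y \<notin> set ys" using l(2) by simp
  have "(x, y) \<in> {(y, hd ys)} \<union> pr ys \<union> {(last ys, y)}" using xy(1) ys(2) cp_Cons[OF ne, of y] by simp
  moreover have "(x, y) \<notin> pr ys" using yn pr_sub_set by fastforce
  moreover have "(x, y) \<noteq> (y, hd ys)" using yn ne by auto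
  ultimately have xl: "x = last ys" by auto
  define B where "B = A - {a}"
  define T where "T = B \<union> B\<inverse>"
  have sw: "successively (uadj A) (y # ys)"
  proof -
    have "successively (uadj A) ((y # ys) @ [y])" using l(3) by simp
    then show ?thesis by (simp only: successively_append_iff)
  qed
  have "successively (\<lambda>p q. (p, q) \<in> T) (y # ys)"
    unfolding successively_pr
  proof (intro ballI, clarify)
    fix p q assume pq: "(p, q) \<in> pr (y # ys)"
    have adj: "uadj A p q" using sw pq unfolding successively_pr by blast
    have "\<not> ((p = x \<and> q = y) \<or> (p = y \<and> q = x))"
    proof
      assume "(p = x \<and> q = y) \<or> (p = y \<and> q = x)"
      then have "y \<in> {p, q}" by auto
      moreover have "pr (y # ys) = insert (y, hd ys) (pr ys)" using pr_Cons[OF ne] .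
      ultimately have "(p, q) = (y, hd ys)" using pq yn pr_sub_set by fastforce
      then show False using \<open>(p = x \<and> q = y) \<or> (p = y \<and> q = x)\<close> xl hl yn ne by auto
    qed
    then show "(p, q) \<in> T" using adj xy(2) unfolding T_def B_def uadj_def by auto
  qed
  then have "(y, x) \<in> T\<^sup>*" using walk_reach[of T "y # ys" x] xl ne by simp
  moreover have symT: "T\<inverse> = T" unfolding T_def by auto
  ultimately have yx: "(y, x) \<in> T\<^sup>*" "(x, y) \<in> T\<^sup>*"
    using rtrancl_converseI[of y x T] by auto
  have "A \<union> A\<inverse> \<subseteq> T\<^sup>*"
  proof
    fix e assume e: "e \<in> A \<union> A\<inverse>"
    show "e \<in> T\<^sup>*"
    proof (cases "e = a \<or> e = prod.swap a")
      case True then show ?thesis using yx xy(2) by auto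
    next
      case False then show ?thesis using e unfolding T_def B_def
        by (auto simp: prod.swap_def)
    qed
  qed
  then have "(A \<union> A\<inverse>)\<^sup>* \<subseteq> T\<^sup>*" by (simp add: rtrancl_subset_rtrancl)
  then have "uconnected V B" using uconn unfolding uconnected_def T_def by blast
  then show ?thesis unfolding is_cut_arc_def B_def by simp
qed

lemma cut_iff: "is_cut_arc V A a \<longleftrightarrow> a \<in> A \<and> a \<notin> Oc"
  using noncycle_cut cycle_not_cut unfolding Oc_def is_cut_arc_def by blast

end


context net begin

lemma XV: "X \<subseteq> V" using Xdef unfolding leaves_def by auto

lemma sum_in: "card A = (\<Sum>v\<in>V. indeg A v)"
proof -
  have "{(u, v) \<in> A. v \<in> V} = A" using AV by auto
  then show ?thesis using card_in_sum[OF finV, of A] fin_in unfolding indeg_def by simp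
qed

lemma sum_out: "card A = (\<Sum>v\<in>V. outdeg A v)"
proof -
  have "{(u, v) \<in> A. u \<in> V} = A" using AV by auto
  then show ?thesis using card_out_sum[OF finV, of A] fin_out unfolding outdeg_def by simp
qed

lemma vertex_id:
  assumes "v \<in> V"
  shows "2 * int (indeg A v) - int (outdeg A v) =
    (if v = r then -2 else 0) + (if v \<in> X then 2 else 0) + (if v \<in> Hs then 3 else 0)"
proof -
  consider "v = r" | "v \<in> X" | "v \<in> Hs" | "v \<noteq> r" "v \<notin> X" "v \<notin> Hs" by blast
  then show ?thesis
  proof cases
    case 1
    then have "v \<notin> X" using leafD in_r by force
    moreover have "v \<notin> Hs" using 1 in_r hyb2 rV unfolding Hs_def by force
    ultimately show ?thesis using 1 in_r out_r by simp
  next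
    case 2
    then have "v \<noteq> r" using leafD in_r by force
    moreover have "v \<notin> Hs" using 2 leafD hyb2 unfolding Hs_def by force
    ultimately show ?thesis using 2 leafD by simp
  next
    case 3
    then have "v \<noteq> r" using in_r hyb2 rV unfolding Hs_def by force
    moreover have "v \<notin> X" using 3 leafD hyb2 unfolding Hs_def by force
    ultimately show ?thesis using 3 hyb2 unfolding Hs_def by simp
  next
    case 4
    then have "is_split A v" using inner[of v] assms unfolding Hs_def by auto
    then show ?thesis using 4 split2 assms unfolding is_split_def by simp
  qed
qed

lemma arcs_count: "int (card A) = 2 * int (card X) + 3 * int (card Hs) - 2"
proof -
  have "int (card A) = 2 * int (card A) - int (card A)" by simp
  also have "\<dots> = (\<Sum>v\<in>V. 2 * int (indeg A v) - int (outdeg A v))"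
  proof -
    have "2 * int (card A) = (\<Sum>v\<in>V. 2 * int (indeg A v))" using sum_in by (simp add: sum_distrib_left)
    moreover have "int (card A) = (\<Sum>v\<in>V. int (outdeg A v))" using sum_out by simp
    ultimately show ?thesis by (simp add: sum_subtractf)
  qed
  also have "\<dots> = (\<Sum>v\<in>V. (if v = r then -2 else 0) + (if v \<in> X then 2 else 0) + (if v \<in> Hs then 3 else 0))"
    using vertex_id by (intro sum.cong) auto
  also have "\<dots> = (\<Sum>v\<in>V. (if v = r then -2 else 0)) + (\<Sum>v\<in>V. (if v \<in> X then 2 else 0))
      + (\<Sum>v\<in>V. (if v \<in> Hs then 3 else (0::int)))"
    by (simp add: sum.distrib)
  also have "(\<Sum>v\<in>V. (if v = r then -2 else (0::int))) = -2" using finV rV by simp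
  also have "(\<Sum>v\<in>V. (if v \<in> X then 2 else (0::int))) = 2 * int (card X)"
  proof -
    have "(\<Sum>v\<in>V. (if v \<in> X then 2 else (0::int))) = (\<Sum>v\<in>V \<inter> X. 2)"
      by (rule sum.inter_restrict[OF finV, symmetric])
    also have "V \<inter> X = X" using XV by auto
    finally show ?thesis by simp
  qed
  also have "(\<Sum>v\<in>V. (if v \<in> Hs then 3 else (0::int))) = 3 * int (card Hs)"
  proof -
    have "(\<Sum>v\<in>V. (if v \<in> Hs then 3 else (0::int))) = (\<Sum>v\<in>V \<inter> Hs. 3)"
      by (rule sum.inter_restrict[OF finV, symmetric])
    also have "V \<inter> Hs = Hs" unfolding Hs_def by auto
    finally show ?thesis by simp
  qed
  finally show ?thesis by simp
qed

definition LA where "LA = {(u, w) \<in> A. w \<in> X}"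

lemma card_LA: "card LA = card X"
proof -
  have "card LA = (\<Sum>w\<in>X. indeg A w)"
    using card_in_sum[of X A] finV XV finite_subset fin_in unfolding LA_def indeg_def by blast
  also have "\<dots> = (\<Sum>w\<in>X. 1)" using leafD by simp
  finally show ?thesis by simp
qed

lemma LA_sub: "LA \<subseteq> A - Oc"
proof
  fix e assume e: "e \<in> LA"
  then obtain u x where ux: "e = (u, x)" "e \<in> A" "x \<in> X" unfolding LA_def by auto
  have "e \<notin> Oc"
  proof
    assume "e \<in> Oc"
    then obtain cs where "ucycle A cs" "e \<in> cycle_arcs A cs" unfolding Oc_def by blast
    then have "x \<in> set cs" using cycle_arcs_verts ux by blast
    then show False using leaf_not_on_cycle \<open>ucycle A cs\<close> ux by blast
  qed
  then show "e \<in> A - Oc" using ux by simp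
qed

lemma nontriv_count: "int (num_nontriv_cut_arcs V A) = int (card A) - int (card Oc) - int (card X)"
proof -
  have "{(u, w). is_cut_arc V A (u, w) \<and> w \<notin> leaves V A} = (A - Oc) - LA"
    unfolding LA_def cut_iff Xdef[symmetric] by auto
  then have "num_nontriv_cut_arcs V A = card ((A - Oc) - LA)" unfolding num_nontriv_cut_arcs_def by simp
  also have "\<dots> = card (A - Oc) - card LA" using LA_sub finA by (meson card_Diff_subset finite_Diff finite_subset)
  also have "card (A - Oc) = card A - card Oc" using Oc_sub finA by (meson card_Diff_subset finite_subset)
  finally have "num_nontriv_cut_arcs V A = card A - card Oc - card X" using card_LA by simp
  moreover have "card LA \<le> card (A - Oc)" using LA_sub finA by (meson card_mono finite_Diff)
  moreover have "card Oc \<le> card A" using Oc_sub finA by (meson card_mono)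
  moreover have "card (A - Oc) = card A - card Oc" using Oc_sub finA by (meson card_Diff_subset finite_subset)
  ultimately show ?thesis using card_LA by simp
qed

lemma out_count:
  assumes "C \<in> galls A"
  shows "card (outgoing_arcs A C) + 1 = card C"
proof -
  obtain cs where cs: "ucycle A cs" "C = cycle_arcs A cs" using assms unfolding galls_eq by blast
  obtain h ys L1 s L2 where st: "struct h ys L1 s L2" and e: "set (h # ys) = set cs"
      "cycle_arcs A (h # ys) = cycle_arcs A cs"
    using struct_exists[OF cs(1)] by blast
  define W where "W = set cs"
  have bv: "block_verts C = W" using block_verts_cycle[OF cs(1)] cs(2) unfolding W_def by simp
  have CW: "C = A \<inter> (W \<times> W)" using no_chords[OF st, unfolded e] cs(2) unfolding W_def by simp
  have cC: "card C = card W" using card_W[OF st, unfolded e] CW unfolding W_def by simp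
  have finW: "finite W" unfolding W_def by simp
  have hW: "h \<in> W" using e unfolding W_def by auto
  have WV: "W \<subseteq> V"
  proof -
    have "C \<subseteq> A" using cs(2) cycle_arcs_sub by blast
    then show "W \<subseteq> V" using bv AV unfolding block_verts_def by auto
  qed
  define T where "T = {(u, w) \<in> A. u \<in> W}"
  have T: "T = C \<union> outgoing_arcs A C" "C \<inter> outgoing_arcs A C = {}"
    unfolding T_def outgoing_arcs_def bv unfolding CW by auto
  have finT: "finite T" unfolding T_def using finA by (rule rev_finite_subset) auto
  have cT: "card T = card C + card (outgoing_arcs A C)"
    using T finT by (metis card_Un_disjoint finite_Un)
  have "card T = (\<Sum>u\<in>W. outdeg A u)"
    using card_out_sum[OF finW, of A] fin_out unfolding T_def outdeg_def by simp
  also have "\<dots> = outdeg A h + (\<Sum>u\<in>W - {h}. outdeg A u)" using sum.remove[OF finW hW] .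
  also have "(\<Sum>u\<in>W - {h}. outdeg A u) = (\<Sum>u\<in>W - {h}. 2)"
  proof (intro sum.cong refl)
    fix u assume u: "u \<in> W - {h}"
    have "\<not> hyb u" using cyc_hyb_unique[OF cs(1), of u h] st_basic(2)[OF st] u hW unfolding W_def by auto
    moreover have "u \<notin> X" using leaf_not_on_cycle[OF cs(1)] u unfolding W_def by auto
    ultimately show "outdeg A u = 2" using nonhyb_nonleaf_out WV u by auto
  qed
  also have "outdeg A h = 1" using hyb2 st_basic(2,3)[OF st] by simp
  finally have "card T = 1 + 2 * (card W - 1)" using finW hW by simp
  moreover have "card W \<ge> 1" using finW hW card_0_eq by fastforce
  ultimately show ?thesis using cT cC by simp
qed

end


theorem mainTheorem3:
  fixes V :: "'v set" and A :: "('v \<times> 'v) set" and X :: "'v set" and r :: 'v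
  assumes "binary_level1 V A X r"
    and "card X \<ge> 2"
  shows "int (num_galls A) \<le> int (card X) - int (num_nontriv_cut_arcs V A) - 2 \<and>
         ((\<forall>v\<in>V. \<not> is_hybrid A v) \<or> (\<forall>C \<in> galls A. card (outgoing_arcs A C) = 3)
          \<longrightarrow> int (num_galls A) = int (card X) - int (num_nontriv_cut_arcs V A) - 2)"
proof -
  interpret net V A X r using assms(1) by unfold_locales
  have g: "num_galls A = card Hs" unfolding num_galls_def using g_eq .
  have c: "int (num_nontriv_cut_arcs V A) = int (card A) - int (card Oc) - int (card X)"
    using nontriv_count .
  have a: "int (card A) = 2 * int (card X) + 3 * int (card Hs) - 2" using arcs_count .
  have o: "card Oc = (\<Sum>C\<in>galls A. card C)" using card_Oc .
  have o4: "4 * card (galls A) \<le> card Oc"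
  proof -
    have "(\<Sum>C\<in>galls A. 4) \<le> (\<Sum>C\<in>galls A. card C)" using gall_card4 by (intro sum_mono) auto
    then show ?thesis using o by simp
  qed
  have key: "int (card X) - int (num_nontriv_cut_arcs V A) - 2 = int (card Oc) - 3 * int (num_galls A)"
    using c a g by simp
  have part1: "int (num_galls A) \<le> int (card X) - int (num_nontriv_cut_arcs V A) - 2"
    using key o4 unfolding num_galls_def by simp
  have part2: "int (num_galls A) = int (card X) - int (num_nontriv_cut_arcs V A) - 2"
    if h: "(\<forall>v\<in>V. \<not> is_hybrid A v) \<or> (\<forall>C \<in> galls A. card (outgoing_arcs A C) = 3)"
  proof -
    have "card Oc = 4 * card (galls A)"
      using h
    proof
      assume "\<forall>v\<in>V. \<not> is_hybrid A v"
      then have "Hs = {}" unfolding Hs_def by auto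
      then have "galls A = {}" using g_eq finite_galls by simp
      then show ?thesis using o by simp
    next
      assume h3: "\<forall>C \<in> galls A. card (outgoing_arcs A C) = 3"
      have "(\<Sum>C\<in>galls A. card C) = (\<Sum>C\<in>galls A. 4)"
        using h3 out_count by (intro sum.cong) force+
      then show ?thesis using o by simp
    qed
    then show ?thesis using key unfolding num_galls_def by simp
  qed
  show ?thesis using part1 part2 by blast
qed



end
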